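(* Let $S\subset\mathbb{Z}^d$ be a finite set (not necessarily symmetric), $\mathcal{P}=\{P_\alpha\}_{\alpha\in S}$ a resolution of unity on $\mathbb{C}^D$, $C$ a $D\times D$ unitary matrix with $C^2=I$ that is not a scalar multiple of the identity, $\mathcal{S}=\sum_{\alpha\in S}\tau^\alpha P_\alpha$, and $U_C=\mathcal{S}^*C\mathcal{S}C$ on $\ell^2(\mathbb{Z}^d,\mathbb{C}^D)$. If $\dim\mathcal{E}(1)<\dim\mathcal{E}(-1)$, then $U_C$ has eigenvalue $1$; consequently there exist a nonzero $\phi\in\mathbb{C}^D$ and $x_o\in\mathbb{Z}^d$ with $\limsup_{n\to\infty}\|U_C^n(\delta_0\otimes\phi)(x_o)\|^2>0$.
   Context: A resolution of unity: orthogonal projections $P_\alpha$ on $\mathbb{C}^D$, $P_\alpha P_\beta=0$ ($\alpha\neq\beta$), $\sum_\alpha P_\alpha=I$. $(\tau^\alpha f)(x)=f(x-\alpha)$; $C$ acts pointwise on $\ell^2(\mathbb{Z}^d,\mathbb{C}^D)$. $\mathcal{E}(\pm1)$ are the eigenspaces of $C$ for $\pm1$. $\delta_0\otimes\phi$ equals $\phi$ at $0$ and $0$ elsewhere. Eigenvalue means point spectrum. *)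

theory Defs
  imports "HOL-Analysis.Analysis"
begin

text \<open>Sites are points of the lattice Z^d, modelled as int^'d (d = CARD('d));
  internal states live in C^D, modelled as complex^'n (D = CARD('n)).\<close>

definition cadj :: "complex^'n^'m \<Rightarrow> complex^'m^'n" where
  "cadj A = (\<chi> i j. cnj (A $ j $ i))"

definition unitary_mat :: "complex^'n^'n \<Rightarrow> bool" where
  "unitary_mat C \<longleftrightarrow> cadj C ** C = mat 1 \<and> C ** cadj C = mat 1"

definition orth_proj :: "complex^'n^'n \<Rightarrow> bool" where
  "orth_proj P \<longleftrightarrow> P ** P = P \<and> cadj P = P"

definition resolution_of_unity :: "'i set \<Rightarrow> ('i \<Rightarrow> complex^'n^'n) \<Rightarrow> bool" where
  "resolution_of_unity S P \<longleftrightarrow>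
     (\<forall>a\<in>S. orth_proj (P a)) \<and>
     (\<forall>a\<in>S. \<forall>b\<in>S. a \<noteq> b \<longrightarrow> P a ** P b = 0) \<and>
     (\<Sum>a\<in>S. P a) = mat 1"

definition ell2 :: "(int^'d \<Rightarrow> complex^'n) \<Rightarrow> bool" where
  "ell2 f \<longleftrightarrow> (\<lambda>x. (norm (f x))\<^sup>2) summable_on UNIV"

definition transl :: "int^'d \<Rightarrow> (int^'d \<Rightarrow> 'b) \<Rightarrow> (int^'d \<Rightarrow> 'b)" where
  "transl a f = (\<lambda>x. f (x - a))"

definition ptw :: "complex^'n^'n \<Rightarrow> ('x \<Rightarrow> complex^'n) \<Rightarrow> ('x \<Rightarrow> complex^'n)" where
  "ptw A f = (\<lambda>x. A *v f x)"

definition shift_op :: "(int^'d) set \<Rightarrow> (int^'d \<Rightarrow> complex^'n^'n)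
    \<Rightarrow> (int^'d \<Rightarrow> complex^'n) \<Rightarrow> (int^'d \<Rightarrow> complex^'n)" where
  "shift_op S P f = (\<lambda>x. \<Sum>a\<in>S. transl a (ptw (P a) f) x)"

text \<open>Its Hilbert-space adjoint S^* = sum_a P_a^* (tau^a)^* = sum_a P_a tau^(-a)
  (written out using cadj of P_a; tau^a is unitary with inverse tau^(-a)).\<close>
definition shift_adj :: "(int^'d) set \<Rightarrow> (int^'d \<Rightarrow> complex^'n^'n)
    \<Rightarrow> (int^'d \<Rightarrow> complex^'n) \<Rightarrow> (int^'d \<Rightarrow> complex^'n)" where
  "shift_adj S P f = (\<lambda>x. \<Sum>a\<in>S. ptw (cadj (P a)) (transl (- a) f) x)"

definition U_op :: "(int^'d) set \<Rightarrow> (int^'d \<Rightarrow> complex^'n^'n) \<Rightarrow> complex^'n^'n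
    \<Rightarrow> (int^'d \<Rightarrow> complex^'n) \<Rightarrow> (int^'d \<Rightarrow> complex^'n)" where
  "U_op S P C = shift_adj S P \<circ> ptw C \<circ> shift_op S P \<circ> ptw C"

definition eigsp :: "complex^'n^'n \<Rightarrow> complex \<Rightarrow> (complex^'n) set" where
  "eigsp C c = {v. C *v v = c *s v}"

definition has_eigenvalue_l2 :: "((int^'d \<Rightarrow> complex^'n) \<Rightarrow> (int^'d \<Rightarrow> complex^'n)) \<Rightarrow> complex \<Rightarrow> bool" where
  "has_eigenvalue_l2 U c \<longleftrightarrow> (\<exists>f. ell2 f \<and> f \<noteq> (\<lambda>_. 0) \<and> U f = (\<lambda>x. c *s f x))"

definition delta_tensor :: "'b \<Rightarrow> (int^'d \<Rightarrow> 'b::zero)" where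
  "delta_tensor \<phi> = (\<lambda>x. if x = 0 then \<phi> else 0)"

end

theory Submission imports Defs "HOL-Library.Function_Algebras" begin

lemma kernel_exists:
  fixes s :: "'a::field \<Rightarrow> 'b::ab_group_add \<Rightarrow> 'b"
  assumes vs: "vector_space s" and lin: "Vector_Spaces.linear s s L"
    and ind: "module.independent s X" and fX: "finite X" and fY: "finite Y"
    and sub: "L ` X \<subseteq> module.span s Y" and lt: "card Y < card X"
  shows "\<exists>v\<in>module.span s X. v \<noteq> 0 \<and> L v = 0"
proof (rule ccontr)
  interpret vector_space_pair s s using vs by (simp add: vector_space_pair_def)
  assume "\<not> ?thesis"
  hence inj: "inj_on L (vs1.span X)"
    using linear_inj_on_iff_eq_0[OF lin vs1.subspace_span] by blast
  hence "vs1.independent (L ` X)" using linear_independent_injective_image[OF lin ind] by blast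
  moreover have "card (L ` X) = card X"
    using inj vs1.span_superset by (meson card_image inj_on_subset)
  ultimately show False using vs1.independent_span_bound[OF fY _ sub] lt by auto
qed

definition fs :: "complex \<Rightarrow> ('x \<Rightarrow> complex^'n) \<Rightarrow> ('x \<Rightarrow> complex^'n)" where
  "fs c g = (\<lambda>x. c *s g x)"

lemma vs_fs: "vector_space (fs :: complex \<Rightarrow> ('x \<Rightarrow> complex^'n) \<Rightarrow> _)"
  by unfold_locales (auto simp: fs_def fun_eq_iff vec_eq_iff algebra_simps)

lemma mv_scale: "(A::complex^'n^'m) *v (c *s v) = c *s (A *v v)"
  by (simp add: vec_eq_iff matrix_vector_mult_def sum_distrib_left algebra_simps)

lemma ptw_add: "ptw A (g + h) = ptw A g + ptw A h"
  by (simp add: ptw_def fun_eq_iff matrix_vector_right_distrib)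
lemma ptw_scale: "ptw A (fs c g) = fs c (ptw A g)"
  by (simp add: ptw_def fs_def fun_eq_iff mv_scale)
lemma transl_add: "transl a (g + h) = transl a g + transl a h"
  by (simp add: transl_def fun_eq_iff)
lemma transl_scale: "transl a (fs c g) = fs c (transl a g)"
  by (simp add: transl_def fs_def fun_eq_iff)
lemma shift_op_add: "shift_op S P (g + h) = shift_op S P g + shift_op S P h"
  by (simp add: shift_op_def fun_eq_iff ptw_add transl_add sum.distrib)
lemma shift_op_scale: "shift_op S P (fs c g) = fs c (shift_op S P g)"
  by (simp add: shift_op_def fun_eq_iff ptw_def transl_def fs_def mv_scale vec.scale_sum_right)
lemma shift_adj_add: "shift_adj S P (g + h) = shift_adj S P g + shift_adj S P h"
  by (simp add: shift_adj_def fun_eq_iff ptw_add transl_add sum.distrib)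
lemma shift_adj_scale: "shift_adj S P (fs c g) = fs c (shift_adj S P g)"
  by (simp add: shift_adj_def fun_eq_iff ptw_def transl_def fs_def mv_scale vec.scale_sum_right)
lemma U_add: "U_op S P C (g + h) = U_op S P C g + U_op S P C h"
  by (simp add: U_op_def ptw_add shift_op_add shift_adj_add)
lemma U_scale: "U_op S P C (fs c g) = fs c (U_op S P C g)"
  by (simp add: U_op_def ptw_scale shift_op_scale shift_adj_scale)
lemma Un_add: "(U_op S P C ^^ n) (g + h) = (U_op S P C ^^ n) g + (U_op S P C ^^ n) h"
  by (induction n) (simp_all only: funpow.simps comp_apply U_add id_apply)
lemma Un_scale: "(U_op S P C ^^ n) (fs c g) = fs c ((U_op S P C ^^ n) g)"
  by (induction n) (simp_all only: funpow.simps comp_apply U_scale id_apply)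

lemma transl_ptw: "transl a (ptw A g) = ptw A (transl a g)"
  by (simp add: transl_def ptw_def)
lemma transl_shift_op: "transl b (shift_op S P g) = shift_op S P (transl b g)"
  by (simp add: transl_def shift_op_def ptw_def fun_eq_iff algebra_simps)
lemma transl_shift_adj: "transl b (shift_adj S P g) = shift_adj S P (transl b g)"
  by (simp add: transl_def shift_adj_def ptw_def fun_eq_iff algebra_simps)
lemma transl_U: "transl b (U_op S P C g) = U_op S P C (transl b g)"
  by (simp add: U_op_def transl_ptw transl_shift_op transl_shift_adj)
lemma transl_Un: "transl b ((U_op S P C ^^ n) g) = (U_op S P C ^^ n) (transl b g)"
  by (induction n arbitrary: g) (simp_all add: transl_U)

lemma Un_sum: "finite J \<Longrightarrow> (U_op S P C ^^ n) (\<Sum>j\<in>J. fs (c j) (h j)) = (\<Sum>j\<in>J. fs (c j) ((U_op S P C ^^ n) (h j)))"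
proof (induction J rule: finite_induct)
  case empty
  have e: "fs 0 (0::int^'d \<Rightarrow> complex^'n) = 0" by (simp add: fs_def fun_eq_iff)
  have "(U_op S P C ^^ n) 0 = (U_op S P C ^^ n) (fs 0 0)" by (simp only: e)
  also have "\<dots> = fs 0 ((U_op S P C ^^ n) 0)" by (rule Un_scale)
  also have "\<dots> = 0" by (simp add: fs_def fun_eq_iff)
  finally show ?case by (simp only: sum.empty)
next
  case (insert x F)
  then show ?case by (simp only: sum.insert[OF insert(1,2)] Un_add Un_scale insert(3))
qed

lemma lin_U: "Vector_Spaces.linear fs fs (U_op S P C)"
  unfolding Vector_Spaces.linear_iff by (simp add: vs_fs U_add U_scale)

lemma mv_sum_left: "finite S \<Longrightarrow> (\<Sum>a\<in>S. A a) *v (v::complex^'n) = (\<Sum>a\<in>S. A a *v v)"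
  by (induction S rule: finite_induct) (simp_all add: matrix_vector_mult_add_rdistrib)

lemma mv_sum_right: "(A::complex^'n^'m) *v (\<Sum>a\<in>S. f a) = (\<Sum>a\<in>S. A *v f a)"
  by (rule vec.linear_sum[OF matrix_vector_mul_linear_gen])

lemma shift_adj_op:
  assumes fin: "finite S" and R: "resolution_of_unity S P"
  shows "shift_adj S P (shift_op S P g) = g"
proof
  fix x
  have Pa: "\<And>a. a \<in> S \<Longrightarrow> cadj (P a) = P a \<and> P a ** P a = P a"
    using R by (auto simp: resolution_of_unity_def orth_proj_def)
  have Pab: "\<And>a b. a \<in> S \<Longrightarrow> b \<in> S \<Longrightarrow> a \<noteq> b \<Longrightarrow> P a ** P b = 0"
    using R by (auto simp: resolution_of_unity_def)
  have sumP: "(\<Sum>a\<in>S. P a) = mat 1" using R by (auto simp: resolution_of_unity_def)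
  have inner: "(\<Sum>b\<in>S. P a *v (P b *v g (x + a - b))) = P a *v g x" if a: "a \<in> S" for a
  proof -
    have "(\<Sum>b\<in>S. P a *v (P b *v g (x + a - b))) = P a *v (P a *v g (x + a - a)) + (\<Sum>b\<in>S-{a}. P a *v (P b *v g (x + a - b)))"
      using fin a by (simp add: sum.remove)
    also have "(\<Sum>b\<in>S-{a}. P a *v (P b *v g (x + a - b))) = 0"
    proof (rule sum.neutral, rule ballI)
      fix b assume "b \<in> S-{a}"
      hence "P a ** P b = 0" using Pab a by auto
      thus "P a *v (P b *v g (x + a - b)) = 0" by (simp add: matrix_vector_mul_assoc)
    qed
    finally show ?thesis using Pa[OF a] by (simp add: matrix_vector_mul_assoc)
  qed
  have "shift_adj S P (shift_op S P g) x = (\<Sum>a\<in>S. P a *v (\<Sum>b\<in>S. P b *v g (x + a - b)))"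
    unfolding shift_adj_def shift_op_def ptw_def transl_def using Pa
    by (intro sum.cong) (auto simp: algebra_simps)
  also have "\<dots> = (\<Sum>a\<in>S. P a *v g x)"
    by (intro sum.cong refl) (simp add: mv_sum_right inner)
  also have "\<dots> = g x" using fin by (simp add: mv_sum_left[symmetric] sumP)
  finally show "shift_adj S P (shift_op S P g) x = g x" .
qed

lemma U_fix:
  assumes fin: "finite S" and R: "resolution_of_unity S P"
    and f1: "\<And>x. C *v f x = - f x" and f2: "\<And>x. C *v shift_op S P f x = - shift_op S P f x"
  shows "U_op S P C f = f"
proof -
  have "ptw C f = fs (-1) f" by (simp add: ptw_def fs_def fun_eq_iff f1)
  hence "U_op S P C f = shift_adj S P (ptw C (fs (-1) (shift_op S P f)))"
    by (simp add: U_op_def shift_op_scale)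
  also have "ptw C (fs (-1) (shift_op S P f)) = shift_op S P f"
    by (simp add: ptw_def fs_def fun_eq_iff mv_scale f2 vec.linear_neg[OF matrix_vector_mul_linear_gen])
  finally show ?thesis using shift_adj_op[OF fin R] by simp
qed

lemma sum_fun_apply: "(\<Sum>j\<in>J. (h j :: 'x \<Rightarrow> 'b::comm_monoid_add)) x = (\<Sum>j\<in>J. h j x)"
  by (induction J rule: infinite_finite_induct) auto

lemma card_box:
  "card {x::int^'d. \<forall>i. lo \<le> x$i \<and> x$i < hi} = nat (hi - lo) ^ CARD('d)"
proof -
  have eq: "{x::int^'d. \<forall>i. lo \<le> x$i \<and> x$i < hi} = vec_lambda ` (PiE UNIV (\<lambda>_. {lo..<hi}))"
  proof (rule set_eqI, rule iffI)
    fix x :: "int^'d" assume "x \<in> {x::int^'d. \<forall>i. lo \<le> x$i \<and> x$i < hi}"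
    thus "x \<in> vec_lambda ` (PiE UNIV (\<lambda>_. {lo..<hi}))"
      by (intro image_eqI[of _ _ "vec_nth x"]) auto
  qed auto
  have inj: "inj_on (vec_lambda :: ('d \<Rightarrow> int) \<Rightarrow> _) X" for X
    by (intro inj_onI) (metis vec_lambda_inverse UNIV_I)
  show ?thesis unfolding eq card_image[OF inj] by (simp add: card_PiE)
qed

lemma counting:
  fixes c d k m :: nat assumes "m < k"
  shows "\<exists>N>0. (N + c) ^ d * m < N ^ d * k"
proof -
  have "((\<lambda>N::nat. (1 + real c / real N) ^ d * real m) \<longlongrightarrow> (1 + 0) ^ d * real m) sequentially"
    by (intro tendsto_intros lim_const_over_n)
  hence "eventually (\<lambda>N::nat. (1 + real c / real N) ^ d * real m < real k) sequentially"
    using assms by (intro order_tendstoD) auto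
  moreover have "eventually (\<lambda>N::nat. N > 0) sequentially" by (rule eventually_gt_at_top)
  ultimately obtain N :: nat where N: "N > 0" "(1 + real c / real N) ^ d * real m < real k"
    using eventually_happens' by (metis (mono_tags, lifting) eventually_conj_iff eventually_sequentially order_refl)
  have "(1 + real c / real N) = (real N + real c) / real N" using N(1) by (simp add: field_simps)
  hence "((real N + real c) / real N) ^ d * real m < real k" using N by simp
  hence "(real N + real c) ^ d * real m < real N ^ d * real k"
    using N(1) by (simp add: power_divide field_simps)
  hence "real ((N + c) ^ d * m) < real (N ^ d * k)" by simp
  thus ?thesis using N(1) by (intro exI[of _ N]) (simp only: of_nat_less_iff)
qed

interpretation fv: vector_space "fs :: complex \<Rightarrow> ('x \<Rightarrow> complex^'n) \<Rightarrow> _"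
  by (rule vs_fs)

definition dl :: "'x \<Rightarrow> complex^'n \<Rightarrow> ('x \<Rightarrow> complex^'n)" where
  "dl y e = (\<lambda>x. if x = y then e else 0)"

lemma dl_add: "dl z (a + b) = dl z a + dl z b" by (auto simp: dl_def fun_eq_iff)
lemma dl_scale: "dl z (c *s a) = fs c (dl z a)" by (auto simp: dl_def fs_def fun_eq_iff)
lemma dl_zero: "dl z 0 = 0" by (auto simp: dl_def fun_eq_iff)

lemma fs_apply: "fs c g x = c *s g x" by (simp add: fs_def)

lemma exists_f:
  fixes S :: "(int^'d) set" and P :: "int^'d \<Rightarrow> complex^'n^'n" and C :: "complex^'n^'n"
  assumes fin: "finite S" and C2: "C ** C = mat 1"
    and dims: "vec.dim (eigsp C 1) < vec.dim (eigsp C (-1))"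
  shows "\<exists>f. f \<noteq> 0 \<and> finite {x. f x \<noteq> 0} \<and> (\<forall>x. C *v f x = - f x)
           \<and> (\<forall>x. C *v shift_op S P f x = - shift_op S P f x)"
proof -
  define m where "m = vec.dim (eigsp C 1)"
  define k where "k = vec.dim (eigsp C (-1))"
  obtain E1 where E1: "E1 \<subseteq> eigsp C 1" "vec.independent E1" "eigsp C 1 \<subseteq> vec.span E1" "card E1 = m"
    unfolding m_def by (rule vec.basis_exists)
  obtain Em where Em: "Em \<subseteq> eigsp C (-1)" "vec.independent Em" "eigsp C (-1) \<subseteq> vec.span Em" "card Em = k"
    unfolding k_def by (rule vec.basis_exists)
  have fE1: "finite E1" and fEm: "finite Em" using E1 Em vec.finiteI_independent by auto
  define R :: int where "R = (\<Sum>a\<in>S. \<Sum>i\<in>UNIV. \<bar>a$i\<bar>)"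
  have R: "\<bar>a$i\<bar> \<le> R" if "a \<in> S" for a i
  proof -
    have "\<bar>a$i\<bar> \<le> (\<Sum>i\<in>UNIV. \<bar>a$i\<bar>)" by (rule member_le_sum) auto
    also have "\<dots> \<le> R" unfolding R_def using fin that by (intro member_le_sum) auto
    finally show ?thesis .
  qed
  have R0: "R \<ge> 0" unfolding R_def by (intro sum_nonneg) auto
  obtain N :: nat where N: "N > 0" "(N + 2 * nat R) ^ CARD('d) * m < N ^ CARD('d) * k"
    using counting[of m k "2 * nat R" "CARD('d)"] dims unfolding m_def k_def by auto
  define B where "B = {x::int^'d. \<forall>i. 0 \<le> x$i \<and> x$i < int N}"
  define B' where "B' = {x::int^'d. \<forall>i. -R \<le> x$i \<and> x$i < int N + R}"
  have cB: "card B = N ^ CARD('d)" unfolding B_def card_box by simp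
  have cB': "card B' = (N + 2 * nat R) ^ CARD('d)" unfolding B'_def card_box using R0
    by (simp add: nat_add_distrib nat_mult_distrib add.commute)
  have fB: "finite B" and fB': "finite B'"
    using cB cB' N(1) by (auto intro: card_ge_0_finite)
  have BB': "x + a \<in> B'" if "x \<in> B" "a \<in> S" for x a
  proof -
    have "-R \<le> x$i + a$i \<and> x$i + a$i < int N + R" for i
    proof -
      have "0 \<le> x$i" "x$i < int N" using that(1) unfolding B_def by auto
      moreover have "\<bar>a$i\<bar> \<le> R" using R[OF that(2)] .
      ultimately show ?thesis by linarith
    qed
    thus ?thesis unfolding B'_def by simp
  qed
  define X where "X = (\<lambda>(y,e). dl y e) ` (B \<times> Em)"
  define Y where "Y = (\<lambda>(z,u). dl z u) ` (B' \<times> E1)"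
  define L where "L = (\<lambda>g. shift_op S P g + ptw C (shift_op S P g))"
  have linL: "Vector_Spaces.linear fs fs L"
    unfolding Vector_Spaces.linear_iff L_def
    by (simp add: vs_fs shift_op_add shift_op_scale ptw_add ptw_scale fv.scale_right_distrib)
  have Em0: "0 \<notin> Em" using Em(2) vec.dependent_zero by blast
  have injX: "inj_on (\<lambda>(y,e). dl y e) (B \<times> Em)"
  proof (rule inj_onI, clarsimp)
    fix y e y' e' assume "e \<in> Em" "e' \<in> Em" and eq: "dl y e = dl y' e'"
    hence "e \<noteq> 0" "e' \<noteq> 0" using Em0 by auto
    from eq have "dl y e y = dl y' e' y" by simp
    with \<open>e \<noteq> 0\<close> have "y = y'" by (auto simp: dl_def split: if_splits)
    with eq have "dl y e y = dl y e' y" by simp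
    thus "y = y' \<and> e = e'" using \<open>y = y'\<close> by (simp add: dl_def)
  qed
  have fX: "finite X" unfolding X_def using fB fEm by auto
  have fY: "finite Y" unfolding Y_def using fB' fE1 by auto
  have cX: "card X = N ^ CARD('d) * k"
    unfolding X_def card_image[OF injX] card_cartesian_product cB Em(4) ..
  have cY: "card Y \<le> (N + 2 * nat R) ^ CARD('d) * m"
    unfolding Y_def using card_image_le[of "B' \<times> E1" "\<lambda>(z,u). dl z u"] fB' fE1
    by (simp add: card_cartesian_product cB' E1(4))
  have indX: "fv.independent X"
  proof (rule fv.independent_if_scalars_zero[OF fX])
    fix u v assume sum0: "(\<Sum>x\<in>X. fs (u x) x) = 0" and vX: "v \<in> X"
    then obtain y0 e0 where y0: "y0 \<in> B" "e0 \<in> Em" and v: "v = dl y0 e0" unfolding X_def by auto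
    have "0 = (\<Sum>x\<in>X. fs (u x) x) y0" using sum0 by simp
    also have "\<dots> = (\<Sum>x\<in>X. u x *s x y0)" by (simp add: sum_fun_apply fs_apply)
    also have "\<dots> = (\<Sum>(y,e)\<in>B \<times> Em. u (dl y e) *s dl y e y0)"
      unfolding X_def by (subst sum.reindex[OF injX]) (auto intro!: sum.cong)
    also have "\<dots> = (\<Sum>y\<in>B. \<Sum>e\<in>Em. u (dl y e) *s dl y e y0)"
      by (simp add: sum.cartesian_product)
    also have "\<dots> = (\<Sum>e\<in>Em. u (dl y0 e) *s e)"
    proof -
      have "(\<Sum>y\<in>B. \<Sum>e\<in>Em. u (dl y e) *s dl y e y0) = (\<Sum>y\<in>B. if y = y0 then (\<Sum>e\<in>Em. u (dl y0 e) *s e) else 0)"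
        by (intro sum.cong refl) (auto simp: dl_def)
      also have "\<dots> = (\<Sum>e\<in>Em. u (dl y0 e) *s e)" using fB y0(1) by simp
      finally show ?thesis .
    qed
    finally have "(\<Sum>e\<in>Em. u (dl y0 e) *s e) = 0" by simp
    moreover have "\<forall>T\<subseteq>Em. finite T \<longrightarrow> (\<forall>u. (\<Sum>v\<in>T. u v *s v) = 0 \<longrightarrow> (\<forall>v\<in>T. u v = 0))"
      using Em(2) unfolding vec.independent_explicit_finite_subsets by simp
    ultimately have "u (dl y0 e0) = 0"
      using fEm y0(2) by (meson order_refl)
    thus "u v = 0" using v by simp
  qed
  have dlY: "dl z w \<in> fv.span Y" if z: "z \<in> B'" and w: "w \<in> eigsp C 1" for z w
  proof -
    have "w \<in> vec.span E1" using w E1(3) by auto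
    thus ?thesis
    proof (induction rule: vec.span_induct)
      case base
      show ?case unfolding vec.subspace_def
        by (simp add: dl_add dl_scale dl_zero fv.span_zero fv.span_add fv.span_scale)
    next
      case (step x)
      thus ?case using z unfolding Y_def by (intro fv.span_base) auto
    qed
  qed
  have LX: "L ` X \<subseteq> fv.span Y"
  proof (rule subsetI)
    fix w assume "w \<in> L ` X"
    then obtain y e where y: "y \<in> B" and e: "e \<in> Em" and w: "w = L (dl y e)" unfolding X_def by auto
    define q where "q a = P a *v e + C *v (P a *v e)" for a
    have q: "q a \<in> eigsp C 1" for a
      by (simp add: eigsp_def q_def matrix_vector_right_distrib matrix_vector_mul_assoc matrix_mul_assoc C2 matrix_mul_lid)
    have "L (dl y e) = (\<Sum>a\<in>S. dl (y + a) (q a))"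
    proof
      fix x
      have "shift_op S P (dl y e) x = (\<Sum>a\<in>S. if x = y + a then P a *v e else 0)"
        unfolding shift_op_def transl_def ptw_def dl_def
        by (intro sum.cong refl) (auto simp: algebra_simps)
      hence "L (dl y e) x = (\<Sum>a\<in>S. if x = y + a then P a *v e else 0) + (\<Sum>a\<in>S. if x = y + a then C *v (P a *v e) else 0)"
        unfolding L_def by (simp add: ptw_def mv_sum_right if_distrib[of "\<lambda>v. C *v v"] cong: if_cong)
      also have "\<dots> = (\<Sum>a\<in>S. if x = y + a then q a else 0)"
        unfolding q_def sum.distrib[symmetric] by (intro sum.cong refl) auto
      also have "\<dots> = (\<Sum>a\<in>S. dl (y + a) (q a)) x"
        by (simp add: sum_fun_apply dl_def)
      finally show "L (dl y e) x = (\<Sum>a\<in>S. dl (y + a) (q a)) x" .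
    qed
    also have "\<dots> \<in> fv.span Y"
      using y BB' q by (intro fv.span_sum dlY) auto
    finally show "w \<in> fv.span Y" using w by simp
  qed
  have "card Y < card X" using cX cY N(2) by linarith
  then obtain v where v: "v \<in> fv.span X" "v \<noteq> 0" "L v = 0"
    using kernel_exists[OF vs_fs linL indX fX fY LX] by blast
  have vprop: "(\<forall>x. x \<notin> B \<longrightarrow> v x = 0) \<and> (\<forall>x. C *v v x = - v x)"
    using v(1)
  proof (induction rule: fv.span_induct)
    case base
    show ?case unfolding fv.subspace_def
      by (simp add: fs_apply mv_scale vec.linear_add[OF matrix_vector_mul_linear_gen]
          vec.scale_right_distrib)
  next
    case (step g)
    then obtain y e where "g = dl y e" "y \<in> B" "e \<in> Em" unfolding X_def by auto
    thus ?case using Em(1) by (auto simp: dl_def eigsp_def)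
  qed
  have "finite {x. v x \<noteq> 0}" using vprop fB by (metis (mono_tags, lifting) finite_subset mem_Collect_eq subsetI)
  moreover have "\<forall>x. C *v shift_op S P v x = - shift_op S P v x"
  proof
    fix x
    have "L v x = 0" using v(3) by simp
    hence "shift_op S P v x + C *v shift_op S P v x = 0" by (simp add: L_def ptw_def)
    thus "C *v shift_op S P v x = - shift_op S P v x" by (simp add: eq_neg_iff_add_eq_0 add.commute)
  qed
  ultimately show ?thesis using v(2) vprop by blast
qed

lemma norm_svec: "norm ((c::complex) *s (v::complex^'n)) = norm c * norm v"
  unfolding norm_vec_def by (simp add: norm_mult L2_set_right_distrib)

lemma rep:
  assumes fin: "finite F" and supp: "\<And>x. x \<notin> F \<Longrightarrow> g x = 0"
  shows "g = (\<Sum>p\<in>F \<times> UNIV. fs (g (fst p) $ snd p) (transl (fst p) (delta_tensor (axis (snd p) 1))))"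
    (is "_ = ?R")
proof
  fix x
  have "?R x = (\<Sum>p\<in>F \<times> UNIV. (g (fst p) $ snd p) *s (if x = fst p then axis (snd p) 1 else 0))"
    by (simp add: sum_fun_apply fs_apply transl_def delta_tensor_def)
  also have "\<dots> = (\<Sum>y\<in>F. \<Sum>i\<in>UNIV. (g y $ i) *s (if x = y then axis i 1 else 0))"
    by (simp add: sum.cartesian_product case_prod_beta)
  also have "\<dots> = (\<Sum>y\<in>F. if x = y then (\<Sum>i\<in>UNIV. (g x $ i) *s axis i 1) else 0)"
    by (intro sum.cong refl) auto
  also have "\<dots> = g x" using fin supp by (auto simp: basis_expansion)
  finally show "g x = ?R x" by simp
qed

lemma pigeon:
  assumes "finite J" and "\<forall>n::nat. \<exists>p\<in>J. Q p n"
  shows "\<exists>p\<in>J. infinite {n. Q p n}"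
proof (rule ccontr)
  assume "\<not> ?thesis"
  hence "finite (\<Union>p\<in>J. {n. Q p n})" using assms(1) by auto
  moreover have "(\<Union>p\<in>J. {n. Q p n}) = UNIV" using assms(2) by auto
  ultimately show False by simp
qed

lemma limsup_pos:
  fixes h :: "nat \<Rightarrow> real"
  assumes inf: "infinite {n. c \<le> h n}" and c: "c > 0"
  shows "limsup (\<lambda>n. ereal ((h n)\<^sup>2)) > 0"
proof -
  define r where "r = enumerate {n. c \<le> h n}"
  have r: "strict_mono r" unfolding r_def using inf by (rule strict_mono_enumerate)
  have "c \<le> h (r k)" for k using enumerate_in_set[OF inf] unfolding r_def by auto
  hence "c\<^sup>2 \<le> (h (r k))\<^sup>2" for k using c by (meson less_le_not_le power_mono)
  hence "ereal (c\<^sup>2) \<le> limsup ((\<lambda>n. ereal ((h n)\<^sup>2)) \<circ> r)"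
    by (intro le_Limsup) auto
  also have "\<dots> \<le> limsup (\<lambda>n. ereal ((h n)\<^sup>2))" by (rule limsup_subseq_mono[OF r])
  finally show ?thesis using c by (meson ereal_less(2) order_less_le_trans zero_less_power)
qed

theorem theorem5p1:
  fixes S :: "(int^'d) set"
    and P :: "int^'d \<Rightarrow> complex^'n^'n"
    and C :: "complex^'n^'n"
  assumes "finite S"
    and "resolution_of_unity S P"
    and "unitary_mat C"
    and "C ** C = mat 1"
    and "\<forall>c. C \<noteq> mat c"
    and "vec.dim (eigsp C 1) < vec.dim (eigsp C (-1))"
  shows "has_eigenvalue_l2 (U_op S P C) 1 \<and>
    (\<exists>\<phi>::complex^'n. \<exists>xo::int^'d. \<phi> \<noteq> 0 \<and>
       limsup (\<lambda>n. ereal ((norm (((U_op S P C) ^^ n) (delta_tensor \<phi>) xo))\<^sup>2)) > 0)"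
proof -
  obtain f :: "int^'d \<Rightarrow> complex^'n" where f: "f \<noteq> 0" "finite {x. f x \<noteq> 0}" "\<forall>x. C *v f x = - f x"
    "\<forall>x. C *v shift_op S P f x = - shift_op S P f x"
    using exists_f[OF assms(1,4,6), of P] by blast
  have fU: "U_op S P C f = f" by (rule U_fix[OF assms(1,2)]) (simp_all add: f(3,4))
  have "ell2 f" unfolding ell2_def
    by (rule finite_nonzero_values_imp_summable_on, rule finite_subset[OF _ f(2)]) auto
  moreover have "f \<noteq> (\<lambda>_. 0)" using f(1) by (simp add: zero_fun_def)
  ultimately have part1: "has_eigenvalue_l2 (U_op S P C) 1"
    unfolding has_eigenvalue_l2_def using fU by auto
  define F where "F = {x. f x \<noteq> 0}"
  obtain x0 where x0: "f x0 \<noteq> 0" using f(1) by (auto simp: fun_eq_iff)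
  define J where "J = F \<times> (UNIV :: 'n set)"
  have fJ: "finite J" unfolding J_def F_def using f(2) by simp
  define W where "W n i = (U_op S P C ^^ n) (delta_tensor (axis i 1))" for n i
  have fUn: "(U_op S P C ^^ n) f = f" for n by (induction n) (simp_all add: fU)
  have repn: "f x0 = (\<Sum>p\<in>J. (f (fst p) $ snd p) *s W n (snd p) (x0 - fst p))" for n
  proof -
    have e0: "f = (\<Sum>p\<in>J. fs (f (fst p) $ snd p) (transl (fst p) (delta_tensor (axis (snd p) 1))))"
      unfolding J_def F_def using f(2) by (intro rep) auto
    have "f = (U_op S P C ^^ n) (\<Sum>p\<in>J. fs (f (fst p) $ snd p) (transl (fst p) (delta_tensor (axis (snd p) 1))))"
      by (subst e0[symmetric]) (rule fUn[symmetric])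
    also have "\<dots> = (\<Sum>p\<in>J. fs (f (fst p) $ snd p) (transl (fst p) (W n (snd p))))"
      unfolding Un_sum[OF fJ] W_def transl_Un ..
    finally have e: "f = (\<Sum>p\<in>J. fs (f (fst p) $ snd p) (transl (fst p) (W n (snd p))))" .
    have e2: "f x0 = (\<Sum>p\<in>J. fs (f (fst p) $ snd p) (transl (fst p) (W n (snd p)))) x0"
      by (rule fun_cong[OF e])
    also have "\<dots> = (\<Sum>p\<in>J. (f (fst p) $ snd p) *s W n (snd p) (x0 - fst p))"
      by (simp only: sum_fun_apply fs_apply transl_def)
    finally show ?thesis .
  qed
  define M where "M = (\<Sum>p\<in>J. norm (f (fst p) $ snd p))"
  have M0: "M \<ge> 0" unfolding M_def by (intro sum_nonneg) auto
  define c0 where "c0 = norm (f x0) / (2 * (M + 1))"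
  have c0: "c0 > 0" unfolding c0_def using x0 M0 by (intro divide_pos_pos) auto
  have "\<forall>n. \<exists>p\<in>J. c0 \<le> norm (W n (snd p) (x0 - fst p))"
  proof (rule allI, rule ccontr)
    fix n assume "\<not> (\<exists>p\<in>J. c0 \<le> norm (W n (snd p) (x0 - fst p)))"
    hence lt: "\<And>p. p \<in> J \<Longrightarrow> norm (W n (snd p) (x0 - fst p)) \<le> c0" by auto
    have "norm (f x0) \<le> (\<Sum>p\<in>J. norm ((f (fst p) $ snd p) *s W n (snd p) (x0 - fst p)))"
      unfolding repn[of n] by (rule norm_sum)
    also have "\<dots> = (\<Sum>p\<in>J. norm (f (fst p) $ snd p) * norm (W n (snd p) (x0 - fst p)))"
      by (simp add: norm_svec)
    also have "\<dots> \<le> (\<Sum>p\<in>J. norm (f (fst p) $ snd p) * c0)"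
      by (intro sum_mono mult_left_mono lt) auto
    also have "\<dots> = M * c0" unfolding M_def by (simp add: sum_distrib_right)
    also have "\<dots> < norm (f x0)"
    proof -
      have "M * c0 = norm (f x0) * (M / (2 * (M + 1)))" unfolding c0_def using M0 by (simp add: field_simps)
      also have "\<dots> < norm (f x0) * 1"
        using x0 M0 by (intro mult_strict_left_mono) (auto simp: field_simps)
      finally show ?thesis by simp
    qed
    finally show False by simp
  qed
  from pigeon[OF fJ this] obtain p where p: "p \<in> J" "infinite {n. c0 \<le> norm (W n (snd p) (x0 - fst p))}"
    by blast
  have "limsup (\<lambda>n. ereal ((norm (W n (snd p) (x0 - fst p)))\<^sup>2)) > 0"
    by (rule limsup_pos[OF p(2) c0])
  hence lim: "limsup (\<lambda>n. ereal ((norm (((U_op S P C) ^^ n) (delta_tensor (axis (snd p) 1)) (x0 - fst p)))\<^sup>2)) > 0"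
    unfolding W_def .
  have ax: "axis (snd p) 1 \<noteq> (0::complex^'n)" by (simp add: axis_eq_0_iff)
  show ?thesis
    by (intro conjI part1 exI[of _ "axis (snd p) 1"] exI[of _ "x0 - fst p"] ax lim)
qed

end
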